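(* Let $G=(V,E)$ be a finite simple graph, $\omega\in\mathrm{Acyc}(G)$, $P=P(G,[\omega])$, and $\pi,\pi'$ partitions of $V$. Then: (a) If $\pi$ is closed with respect to the ordinary poset $P(G,\omega)$, then $\pi$ is closed with respect to the toric poset $P(G,[\omega])$. (b) If $\pi\le_V\pi'$ then $\mathrm{cl}^{\mathrm{tor}}_P(\pi)\le_V\mathrm{cl}^{\mathrm{tor}}_P(\pi')$. (c) If $\pi\le_V\pi'\le_V\mathrm{cl}^{\mathrm{tor}}_P(\pi)$ then $\mathrm{cl}^{\mathrm{tor}}_P(\pi')=\mathrm{cl}^{\mathrm{tor}}_P(\pi)$. (d) $\mathrm{cl}^{\mathrm{tor}}_{P(G,[\omega])}(\pi)\le_V\mathrm{cl}_{P(G,\omega)}(\pi)$. Moreover, both (a)'s converse and equality in (d) can fail (e.g. for $G=K_3$, $\omega$ the orientation $3\to 1$, $3\to 2$, $1\to 2$, and $\pi=\{\{1\},\{2,3\}\}$, one has $\mathrm{cl}^{\mathrm{tor}}_{P(G,[\omega])}(\pi)=\pi\ne\{\{1,2,3\}\}=\mathrm{cl}_{P(G,\omega)}(\pi)$).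
   Context: $\le_V$ is the refinement order on partitions of $V$: $\pi\le_V\pi'$ iff every block of $\pi$ is contained in a block of $\pi'$. $\mathrm{Acyc}(G)$, flips, $\equiv$, $[\omega]$, $P(G,\omega)$ (transitive closure of $\omega$), the toric chamber $c(P)\subseteq\mathbb{R}^V/\mathbb{Z}^V$ of $P=P(G,[\omega])$ (a connected component of the complement of the toric hyperplanes $\{x_i\equiv x_j \bmod 1\}$, $\{i,j\}\in E$, corresponding to $[\omega]$), $D_\pi=\{x\in\mathbb{R}^V:x_i=x_j$ for $i,j$ in a common block$\}$ and $D^{\mathrm{tor}}_\pi$ its image in $\mathbb{R}^V/\mathbb{Z}^V$ are as usual. Toric closure: $\mathrm{cl}^{\mathrm{tor}}_P(\pi)$ is the coarsest $\bar\pi\ge_V\pi$ with $\overline{c(P)}\cap D^{\mathrm{tor}}_{\bar\pi}=\overline{c(P)}\cap D^{\mathrm{tor}}_\pi$. Ordinary closure: for a poset $Q=P(G,\omega)$, contracting the blocks of $\pi$ gives a preorder on the blocks; $\mathrm{cl}_Q(\pi)$ is obtained by merging all blocks that are equivalent in this preorder (i.e. lie in a common strongly connected component of $\omega/\!\sim_\pi$), the unique minimal coarsening of $\pi$ whose contraction is acyclic. A partition is closed with respect to $Q$ (resp. $P$) if it equals its closure. *)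

theory Defs
  imports "HOL-Analysis.Analysis" "HOL-Library.Disjoint_Sets" "HOL-Library.Numeral_Type"
begin

(* Graph G = (V,E) with V = UNIV of a finite type 'v; E is the set of ordered pairs
   (i,j) such that {i,j} is an edge (so E is symmetric and irreflexive). *)
definition simple_graph :: "('v \<times> 'v) set \<Rightarrow> bool" where
  "simple_graph E \<longleftrightarrow> sym E \<and> irrefl E"

definition Acyc :: "('v \<times> 'v) set \<Rightarrow> ('v \<times> 'v) set set" where
  "Acyc E = {\<omega>. \<omega> \<union> \<omega>\<inverse> = E \<and> \<omega> \<inter> \<omega>\<inverse> = {} \<and> acyclic \<omega>}"

definition poset_of :: "('v \<times> 'v) set \<Rightarrow> ('v \<times> 'v) set" where
  "poset_of \<omega> = \<omega>\<^sup>+"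

definition refines :: "'v set set \<Rightarrow> 'v set set \<Rightarrow> bool" where
  "refines \<pi> \<pi>' \<longleftrightarrow> (\<forall>B\<in>\<pi>. \<exists>B'\<in>\<pi>'. B \<subseteq> B')"

definition quot_rel :: "('v \<times> 'v) set \<Rightarrow> 'v set set \<Rightarrow> ('v set \<times> 'v set) set" where
  "quot_rel Q \<pi> = {(B, B'). B \<in> \<pi> \<and> B' \<in> \<pi> \<and> (\<exists>i\<in>B. \<exists>j\<in>B'. (i, j) \<in> Q)}"

definition ord_cl :: "('v \<times> 'v) set \<Rightarrow> 'v set set \<Rightarrow> 'v set set" where
  "ord_cl Q \<pi> = {\<Union>{B' \<in> \<pi>. (B, B') \<in> (quot_rel Q \<pi>)\<^sup>* \<and> (B', B) \<in> (quot_rel Q \<pi>)\<^sup>*} | B. B \<in> \<pi>}"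

(* Torus R^V/Z^V modelled as (S^1)^V inside complex^'v via x |-> (exp(2 pi i x_v))_v.
   This map is R^V -> R^V/Z^V followed by a homeomorphism onto (S^1)^V. *)
definition tmap :: "real^'v \<Rightarrow> complex^'v" where
  "tmap x = (\<chi> i. cis (2 * pi * x $ i))"

definition toric_hyperplane :: "'v \<Rightarrow> 'v \<Rightarrow> (complex^'v) set" where
  "toric_hyperplane i j = tmap ` {x. x $ i - x $ j \<in> \<int>}"

definition toric_complement :: "('v \<times> 'v) set \<Rightarrow> (complex^'v) set" where
  "toric_complement E = range tmap - \<Union>{toric_hyperplane i j | i j. (i, j) \<in> E}"

definition real_chamber :: "('v \<times> 'v) set \<Rightarrow> (real^'v) set" where
  "real_chamber \<omega> = {x. \<forall>(i, j) \<in> \<omega>. x $ i < x $ j}"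

(* toric chamber c(P), P = P(G,[omega]): the connected component of the complement of the toric
   arrangement containing the image of c(omega) \<inter> (0,1)^V (this set is convex, nonempty, and
   maps into the complement, so it lies in exactly one component). *)
definition toric_chamber :: "('v \<times> 'v) set \<Rightarrow> ('v \<times> 'v) set \<Rightarrow> (complex^'v) set" where
  "toric_chamber E \<omega> = \<Union>{connected_component_set (toric_complement E) (tmap x) | x.
       x \<in> real_chamber \<omega> \<and> (\<forall>i. 0 < x $ i \<and> x $ i < 1)}"

definition Dpi :: "'v set set \<Rightarrow> (real^'v) set" where
  "Dpi \<pi> = {x. \<forall>B\<in>\<pi>. \<forall>i\<in>B. \<forall>j\<in>B. x $ i = x $ j}"

definition Dtor :: "'v set set \<Rightarrow> (complex^'v) set" where
  "Dtor \<pi> = tmap ` Dpi \<pi>"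

(* toric closure: the coarsest partition pibar >= pi with
   closure(c(P)) \<inter> D^tor_pibar = closure(c(P)) \<inter> D^tor_pi.
   (The torus image is compact, so closure in complex^'v = closure in the torus.) *)
definition tor_cl :: "('v::finite \<times> 'v) set \<Rightarrow> ('v \<times> 'v) set \<Rightarrow> 'v set set \<Rightarrow> 'v set set" where
  "tor_cl E \<omega> \<pi> = (THE \<sigma>. \<sigma> \<in> {\<tau>. partition_on UNIV \<tau> \<and> refines \<pi> \<tau> \<and>
        closure (toric_chamber E \<omega>) \<inter> Dtor \<tau> = closure (toric_chamber E \<omega>) \<inter> Dtor \<pi>}
     \<and> (\<forall>\<tau> \<in> {\<tau>. partition_on UNIV \<tau> \<and> refines \<pi> \<tau> \<and>
        closure (toric_chamber E \<omega>) \<inter> Dtor \<tau> = closure (toric_chamber E \<omega>) \<inter> Dtor \<pi>}.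
        refines \<tau> \<sigma>))"

end

theory Submission
  imports Defs
begin

lemma "(1::3) \<noteq> 2 \<and> (1::3) \<noteq> 3 \<and> (2::3)\<noteq>3" by simp
lemma L1: assumes "cis (2*pi*a) = cis (2*pi*b)" shows "a - b \<in> \<int>"
proof -
  from assms have "exp (\<i> * complex_of_real (2*pi*a)) = exp (\<i> * complex_of_real (2*pi*b))"
    by (simp add: cis_conv_exp)
  then obtain n::int where n: "\<i> * complex_of_real (2*pi*a) = \<i> * complex_of_real (2*pi*b) + (of_int (2*n) * pi) * \<i>"
    by (auto simp: exp_eq)
  then have "\<i> * complex_of_real (2*pi*a) = \<i> * complex_of_real (2*pi*b + 2*n*pi)"
    by (simp add: algebra_simps)
  then have "complex_of_real (2*pi*a) = complex_of_real (2*pi*b + 2*n*pi)"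
    using mult_cancel_left[of "\<i>"] by simp
  then have "2*pi*a = 2*pi*b + 2*n*pi" using of_real_eq_iff by blast
  then have "2*pi*a = 2*pi*(b + n)" by (simp add: algebra_simps)
  then have "a = b + n" using pi_gt_zero by (metis mult_cancel_left mult_eq_0_iff zero_neq_numeral pi_neq_zero)
  then show ?thesis by simp
qed

lemma tmap_eqD: "tmap x = tmap y \<Longrightarrow> x$i - y$i \<in> \<int>"
  by (rule L1) (metis tmap_def vec_lambda_beta)

definition chamb :: "('v \<times> 'v) set \<Rightarrow> (real^'v) set" where
  "chamb \<omega> = real_chamber \<omega> \<inter> {x. \<forall>i. 0 < x$i \<and> x$i < 1}"

lemma not_Ints_small: assumes "0 < \<bar>d::real\<bar>" "\<bar>d\<bar> < 1" shows "d \<notin> \<int>"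
proof
  assume "d \<in> \<int>" then obtain n::int where "d = of_int n" by (auto elim: Ints_cases)
  with assms show False by simp
qed

lemma L2: assumes "\<omega> \<in> Acyc E" "x \<in> chamb \<omega>" shows "tmap x \<in> toric_complement E"
proof -
  have "tmap x \<notin> toric_hyperplane i j" if "(i,j) \<in> E" for i j
  proof
    assume "tmap x \<in> toric_hyperplane i j"
    then obtain v where v: "tmap x = tmap v" "v$i - v$j \<in> \<int>" by (auto simp: toric_hyperplane_def)
    have "x$i - v$i \<in> \<int>" "x$j - v$j \<in> \<int>" using v(1) tmap_eqD by blast+
    then have "(x$i - v$i) - (x$j - v$j) + (v$i - v$j) \<in> \<int>" using v(2) by (metis Ints_add Ints_diff)
    then have xi: "x$i - x$j \<in> \<int>" by simp
    have xc: "\<forall>(i,j)\<in>\<omega>. x$i < x$j" "\<forall>i. 0 < x$i \<and> x$i < 1" using assms(2) by (auto simp: chamb_def real_chamber_def)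
    have "(i,j) \<in> \<omega> \<or> (j,i) \<in> \<omega>" using that assms(1) by (auto simp: Acyc_def)
    then have "0 < \<bar>x$i - x$j\<bar> \<and> \<bar>x$i - x$j\<bar> < 1"
    proof
      assume a: "(i,j) \<in> \<omega>"
      then have "x$i < x$j" "0 < x$i" "x$j < 1" using xc by auto
      then show ?thesis by linarith
    next
      assume a: "(j,i) \<in> \<omega>"
      then have "x$j < x$i" "0 < x$j" "x$i < 1" using xc by auto
      then show ?thesis by linarith
    qed
    with xi not_Ints_small show False by blast
  qed
  then show ?thesis by (auto simp: toric_complement_def)
qed

lemma L3: assumes "\<omega> \<in> Acyc E" "x \<in> chamb \<omega>" shows "tmap x \<in> toric_chamber E \<omega>"
proof -
  have "tmap x \<in> connected_component_set (toric_complement E) (tmap x)"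
    using L2[OF assms] by simp
  then show ?thesis using assms(2) unfolding toric_chamber_def chamb_def by blast
qed

lemma tmap_cont: "continuous_on UNIV tmap"
  unfolding tmap_def by (intro continuous_intros)

lemma L4:
  assumes "\<omega> \<in> Acyc E" "y \<in> chamb \<omega>" "\<forall>(i,j)\<in>\<omega>. x$i \<le> x$j" "\<forall>i. 0 \<le> x$i \<and> x$i \<le> 1"
  shows "tmap x \<in> closure (toric_chamber E \<omega>)"
proof -
  define s where "s n = x + inverse (real (Suc n)) *\<^sub>R (y - x)" for n
  have sc: "s n \<in> chamb \<omega>" for n
  proof -
    define t where "t = inverse (real (Suc n))"
    have t: "0 < t" "t \<le> 1" by (auto simp: t_def field_simps)
    have e: "s n $ i = (1 - t) * x$i + t * y$i" for i by (simp add: s_def t_def algebra_simps)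
    have "(1 - t) * x$i + t * y$i < (1 - t) * x$j + t * y$j" if "(i,j) \<in> \<omega>" for i j
    proof -
      have "x$i \<le> x$j" using assms(3) that by auto
      then have "(1 - t) * x$i \<le> (1 - t) * x$j" using t by (intro mult_left_mono) auto
      moreover have "y$i < y$j" using assms(2) that by (auto simp: chamb_def real_chamber_def)
      then have "t * y$i < t * y$j" using t by (intro mult_strict_left_mono) auto
      ultimately show ?thesis by linarith
    qed
    moreover have "0 < (1 - t) * x$i + t * y$i \<and> (1 - t) * x$i + t * y$i < 1" for i
    proof -
      have xi: "0 \<le> x$i" "x$i \<le> 1" using assms(4) by auto
      have "0 \<le> (1-t) * x$i" using xi t by (intro mult_nonneg_nonneg) auto
      moreover have "(1-t)*x$i \<le> 1 - t" using xi t mult_left_mono[of "x$i" 1 "1-t"] by simp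
      moreover have yi: "0 < y$i" "y$i < 1" using assms(2) by (auto simp: chamb_def)
      moreover have "0 < t * y$i" using yi t by simp
      moreover have "t * y$i < t" using yi t mult_strict_left_mono[of "y$i" 1 t] by simp
      ultimately show ?thesis by linarith
    qed
    ultimately have A: "\<forall>(i,j)\<in>\<omega>. s n$i < s n$j" and B: "\<forall>i. 0 < s n$i \<and> s n$i < 1"
      unfolding e by auto
    show ?thesis unfolding chamb_def real_chamber_def using A B by blast
  qed
  have "s \<longlonglongrightarrow> x + 0 *\<^sub>R (y - x)"
    unfolding s_def by (rule tendsto_add[OF tendsto_const tendsto_scaleR[OF LIMSEQ_inverse_real_of_nat tendsto_const]])
  then have "s \<longlonglongrightarrow> x" by simp
  then have "(\<lambda>n. tmap (s n)) \<longlonglongrightarrow> tmap x"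
    using tmap_cont continuous_on_tendsto_compose[of UNIV tmap s x sequentially] by simp
  moreover have "tmap (s n) \<in> toric_chamber E \<omega>" for n using L3[OF assms(1) sc] .
  ultimately show ?thesis unfolding closure_sequential by (intro exI[of _ "\<lambda>n. tmap (s n)"]) auto
qed

lemma L5: assumes "acyclic (\<omega>::('v::finite \<times> 'v) set)" shows "\<exists>y. y \<in> chamb \<omega>"
proof -
  define c where "c k = real (card {l. (l,k) \<in> \<omega>\<^sup>*})" for k
  define y :: "real^'v" where "y = (\<chi> k. c k / (real CARD('v) + 1))"
  have c1: "1 \<le> c k" "c k \<le> real CARD('v)" for k
  proof -
    have "k \<in> {l. (l,k) \<in> \<omega>\<^sup>*}" by simp
    then have "card {l. (l,k) \<in> \<omega>\<^sup>*} \<noteq> 0" by (auto simp: card_eq_0_iff)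
    then have "1 \<le> card {l. (l,k) \<in> \<omega>\<^sup>*}" by linarith
    then show "1 \<le> c k" unfolding c_def by linarith
    show "c k \<le> real CARD('v)" unfolding c_def by (simp add: card_mono)
  qed
  have c2: "c i < c j" if "(i,j) \<in> \<omega>" for i j
  proof -
    have "{l. (l,i) \<in> \<omega>\<^sup>*} \<subset> {l. (l,j) \<in> \<omega>\<^sup>*}"
    proof
      show "{l. (l,i) \<in> \<omega>\<^sup>*} \<subseteq> {l. (l,j) \<in> \<omega>\<^sup>*}" using that by (auto intro: rtrancl_into_rtrancl)
      have "(j,i) \<notin> \<omega>\<^sup>*"
      proof
        assume "(j,i) \<in> \<omega>\<^sup>*"
        then have "(j,j) \<in> \<omega>\<^sup>+" using that by (meson rtrancl_into_trancl1)
        then show False using assms by (auto simp: acyclic_def)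
      qed
      then show "{l. (l,i) \<in> \<omega>\<^sup>*} \<noteq> {l. (l,j) \<in> \<omega>\<^sup>*}" by auto
    qed
    then show ?thesis unfolding c_def by (simp add: psubset_card_mono)
  qed
  have "y \<in> chamb \<omega>"
  proof -
    have N: "0 < real CARD('v) + 1" by simp
    have "\<forall>(i,j)\<in>\<omega>. y$i < y$j" unfolding y_def using c2 N by (auto intro: divide_strict_right_mono)
    moreover have "\<forall>i. 0 < y$i \<and> y$i < 1"
    proof
      fix i
      have "0 < c i" "c i < real CARD('v) + 1" using c1[of i] by linarith+
      then show "0 < y$i \<and> y$i < 1" unfolding y_def using N by simp
    qed
    ultimately show ?thesis unfolding chamb_def real_chamber_def by blast
  qed
  then show ?thesis by blast
qed



definition eqv :: "'v set set \<Rightarrow> ('v \<times> 'v) set" where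
  "eqv \<pi> = {(i,j). \<exists>B\<in>\<pi>. i \<in> B \<and> j \<in> B}"

lemma blk_unique: "partition_on UNIV \<pi> \<Longrightarrow> B \<in> \<pi> \<Longrightarrow> B' \<in> \<pi> \<Longrightarrow> k \<in> B \<Longrightarrow> k \<in> B' \<Longrightarrow> B = B'"
  unfolding partition_on_def disjoint_def by blast

lemma blk_ex: "partition_on UNIV \<pi> \<Longrightarrow> \<exists>B\<in>\<pi>. k \<in> B"
  unfolding partition_on_def by blast

lemma P1: "partition_on UNIV \<pi> \<Longrightarrow> equiv UNIV (eqv \<pi>)"
proof -
  assume a: "partition_on UNIV \<pi>"
  show ?thesis unfolding equiv_def
  proof (intro conjI)
    show "refl_on UNIV (eqv \<pi>)" unfolding refl_on_def eqv_def using blk_ex[OF a] by auto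
    show "sym (eqv \<pi>)" unfolding sym_def eqv_def by auto
    show "eqv \<pi> \<subseteq> UNIV \<times> UNIV" by simp
    show "trans (eqv \<pi>)" unfolding trans_def eqv_def
    proof (intro allI impI)
      fix x y z assume "(x, y) \<in> {(i, j). \<exists>B\<in>\<pi>. i \<in> B \<and> j \<in> B}" "(y, z) \<in> {(i, j). \<exists>B\<in>\<pi>. i \<in> B \<and> j \<in> B}"
      then obtain B1 B2 where "B1 \<in> \<pi>" "B2 \<in> \<pi>" "x \<in> B1" "y \<in> B1" "y \<in> B2" "z \<in> B2" by auto
      then show "(x, z) \<in> {(i, j). \<exists>B\<in>\<pi>. i \<in> B \<and> j \<in> B}" using blk_unique[OF a] by blast
    qed
  qed
qed

lemma P2: assumes "partition_on UNIV \<pi>" shows "UNIV // eqv \<pi> = \<pi>"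
proof
  show "UNIV // eqv \<pi> \<subseteq> \<pi>"
  proof
    fix C assume "C \<in> UNIV // eqv \<pi>"
    then obtain i where C: "C = eqv \<pi> `` {i}" by (auto simp: quotient_def)
    obtain B where B: "B \<in> \<pi>" "i \<in> B" using blk_ex[OF assms] by blast
    have "C = B" unfolding C eqv_def using B blk_unique[OF assms] by auto
    then show "C \<in> \<pi>" using B by simp
  qed
  show "\<pi> \<subseteq> UNIV // eqv \<pi>"
  proof
    fix B assume B: "B \<in> \<pi>"
    have "B \<noteq> {}" using assms B unfolding partition_on_def by metis
    then obtain i where i: "i \<in> B" by blast
    have "B = eqv \<pi> `` {i}" unfolding eqv_def using B i blk_unique[OF assms] by auto
    then show "B \<in> UNIV // eqv \<pi>" by (auto simp: quotient_def)
  qed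
qed

lemma P3: assumes "partition_on UNIV \<pi>" "partition_on UNIV \<tau>"
  shows "refines \<pi> \<tau> \<longleftrightarrow> eqv \<pi> \<subseteq> eqv \<tau>"
proof
  assume R: "refines \<pi> \<tau>"
  show "eqv \<pi> \<subseteq> eqv \<tau>"
  proof
    fix p assume "p \<in> eqv \<pi>"
    then obtain i j B where p: "p = (i,j)" "B \<in> \<pi>" "i \<in> B" "j \<in> B" unfolding eqv_def by blast
    then obtain B' where "B' \<in> \<tau>" "B \<subseteq> B'" using R unfolding refines_def by blast
    then show "p \<in> eqv \<tau>" unfolding eqv_def using p by blast
  qed
next
  assume S: "eqv \<pi> \<subseteq> eqv \<tau>"
  show "refines \<pi> \<tau>" unfolding refines_def
  proof
    fix B assume B: "B \<in> \<pi>"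
    have "B \<noteq> {}" using assms(1) B unfolding partition_on_def by metis
    then obtain i where i: "i \<in> B" by blast
    obtain B' where B': "B' \<in> \<tau>" "i \<in> B'" using blk_ex[OF assms(2)] by blast
    have "B \<subseteq> B'"
    proof
      fix j assume "j \<in> B"
      then have "(i,j) \<in> eqv \<pi>" using B i unfolding eqv_def by blast
      then have "(i,j) \<in> eqv \<tau>" using S by blast
      then obtain B'' where "B'' \<in> \<tau>" "i \<in> B''" "j \<in> B''" unfolding eqv_def by blast
      then show "j \<in> B'" using blk_unique[OF assms(2), of B'' B' i] B' by simp
    qed
    then show "\<exists>B'\<in>\<tau>. B \<subseteq> B'" using B' by blast
  qed
qed

lemma P4: assumes "equiv UNIV r" shows "eqv (UNIV // r) = r"
proof
  show "eqv (UNIV // r) \<subseteq> r"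
  proof
    fix p assume "p \<in> eqv (UNIV // r)"
    then obtain i j k where p: "p = (i,j)" "i \<in> r``{k}" "j \<in> r``{k}" unfolding eqv_def quotient_def by blast
    then show "p \<in> r" using assms unfolding equiv_def sym_def trans_def by blast
  qed
  show "r \<subseteq> eqv (UNIV // r)"
  proof
    fix p assume "p \<in> r"
    then obtain i j where p: "p = (i,j)" "(i,j) \<in> r" by (cases p) auto
    have "i \<in> r``{i}" using assms unfolding equiv_def refl_on_def by blast
    moreover have "j \<in> r``{i}" using p by blast
    moreover have "r``{i} \<in> UNIV // r" unfolding quotient_def by blast
    ultimately show "p \<in> eqv (UNIV // r)" unfolding eqv_def p by blast
  qed
qed

lemma P5: "partition_on UNIV \<pi> \<Longrightarrow> partition_on UNIV \<tau> \<Longrightarrow> eqv \<pi> = eqv \<tau> \<Longrightarrow> \<pi> = \<tau>"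
proof -
  assume a: "partition_on UNIV \<pi>" "partition_on UNIV \<tau>" "eqv \<pi> = eqv \<tau>"
  have "\<pi> = UNIV // eqv \<pi>" using P2[OF a(1)] by simp
  also have "\<dots> = UNIV // eqv \<tau>" using a(3) by simp
  also have "\<dots> = \<tau>" using P2[OF a(2)] by simp
  finally show ?thesis .
qed

lemma D1: assumes "partition_on UNIV \<tau>"
  shows "Dtor \<tau> = range tmap \<inter> {z. \<forall>(i,j)\<in>eqv \<tau>. z$i = z$j}"
proof
  show "Dtor \<tau> \<subseteq> range tmap \<inter> {z. \<forall>(i,j)\<in>eqv \<tau>. z$i = z$j}"
  proof
    fix z assume "z \<in> Dtor \<tau>"
    then obtain x where x: "z = tmap x" "x \<in> Dpi \<tau>" unfolding Dtor_def by blast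
    have "z$i = z$j" if ij: "(i,j) \<in> eqv \<tau>" for i j
    proof -
      obtain B where "B \<in> \<tau>" "i \<in> B" "j \<in> B" using ij unfolding eqv_def by blast
      then have "x$i = x$j" using x(2) unfolding Dpi_def by blast
      then show ?thesis unfolding x(1) tmap_def by simp
    qed
    then show "z \<in> range tmap \<inter> {z. \<forall>(i,j)\<in>eqv \<tau>. z$i = z$j}" using x(1) by auto
  qed
  show "range tmap \<inter> {z. \<forall>(i,j)\<in>eqv \<tau>. z$i = z$j} \<subseteq> Dtor \<tau>"
  proof
    fix z assume z: "z \<in> range tmap \<inter> {z. \<forall>(i,j)\<in>eqv \<tau>. z$i = z$j}"
    then obtain x where x: "z = tmap x" by auto
    have eq: "equiv UNIV (eqv \<tau>)" using P1[OF assms] .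
    define r where "r k = (SOME l. (k,l) \<in> eqv \<tau>)" for k
    have r1: "(k, r k) \<in> eqv \<tau>" for k
      unfolding r_def by (rule someI[of _ k]) (use eq in \<open>auto simp: equiv_def refl_on_def\<close>)
    have r2: "r i = r j" if "(i,j) \<in> eqv \<tau>" for i j
    proof -
      have "{l. (i,l) \<in> eqv \<tau>} = {l. (j,l) \<in> eqv \<tau>}"
      proof -
        have "(j,i) \<in> eqv \<tau>" using that eq unfolding equiv_def sym_def by blast
        then show ?thesis using that eq unfolding equiv_def trans_def by blast
      qed
      then have "(\<lambda>l. (i,l) \<in> eqv \<tau>) = (\<lambda>l. (j,l) \<in> eqv \<tau>)" by (simp add: set_eq_iff fun_eq_iff)
      then show ?thesis unfolding r_def by simp
    qed
    define x' :: "real^'a" where "x' = (\<chi> k. x $ r k)"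
    have "tmap x' = z"
    proof -
      have "tmap x' $ k = z $ k" for k
      proof -
        have "tmap x' $ k = tmap x $ r k" by (simp add: tmap_def x'_def)
        also have "\<dots> = z $ r k" using x by simp
        also have "\<dots> = z $ k" using z r1[of k] by auto
        finally show ?thesis .
      qed
      then show ?thesis by (simp add: vec_eq_iff)
    qed
    moreover have "x' \<in> Dpi \<tau>" unfolding Dpi_def
    proof (intro CollectI ballI)
      fix B i j assume "B \<in> \<tau>" "i \<in> B" "j \<in> B"
      then have "(i,j) \<in> eqv \<tau>" unfolding eqv_def by blast
      then show "x' $ i = x' $ j" unfolding x'_def using r2 by simp
    qed
    ultimately show "z \<in> Dtor \<tau>" unfolding Dtor_def by blast
  qed
qed



definition Rt :: "('v::finite \<times> 'v) set \<Rightarrow> ('v \<times> 'v) set \<Rightarrow> 'v set set \<Rightarrow> ('v \<times> 'v) set" where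
  "Rt E \<omega> \<pi> = {(i,j). \<forall>z\<in>closure (toric_chamber E \<omega>) \<inter> Dtor \<pi>. z$i = z$j}"

lemma Req: "equiv UNIV (Rt E \<omega> \<pi>)"
  unfolding equiv_def refl_on_def sym_def trans_def Rt_def by auto

lemma Dmono: assumes "partition_on UNIV \<pi>" "partition_on UNIV \<tau>" "refines \<pi> \<tau>"
  shows "Dtor \<tau> \<subseteq> Dtor \<pi>"
  using D1[OF assms(1)] D1[OF assms(2)] P3[OF assms(1,2)] assms(3) by auto

lemma Rsub: assumes "partition_on UNIV \<pi>" shows "eqv \<pi> \<subseteq> Rt E \<omega> \<pi>"
  unfolding Rt_def using D1[OF assms] by auto

lemma Kchar: assumes "partition_on UNIV \<pi>" "partition_on UNIV \<tau>" "refines \<pi> \<tau>"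
  shows "(closure (toric_chamber E \<omega>) \<inter> Dtor \<tau> = closure (toric_chamber E \<omega>) \<inter> Dtor \<pi>)
     \<longleftrightarrow> eqv \<tau> \<subseteq> Rt E \<omega> \<pi>"
proof
  assume a: "closure (toric_chamber E \<omega>) \<inter> Dtor \<tau> = closure (toric_chamber E \<omega>) \<inter> Dtor \<pi>"
  show "eqv \<tau> \<subseteq> Rt E \<omega> \<pi>"
  proof
    fix p assume p: "p \<in> eqv \<tau>"
    obtain i j where ij: "p = (i,j)" by (cases p)
    have "z$i = z$j" if "z \<in> closure (toric_chamber E \<omega>) \<inter> Dtor \<pi>" for z
    proof -
      have "z \<in> Dtor \<tau>" using that a by blast
      then show ?thesis using D1[OF assms(2)] p ij by auto
    qed
    then show "p \<in> Rt E \<omega> \<pi>" unfolding Rt_def ij by blast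
  qed
next
  assume a: "eqv \<tau> \<subseteq> Rt E \<omega> \<pi>"
  have "closure (toric_chamber E \<omega>) \<inter> Dtor \<pi> \<subseteq> Dtor \<tau>"
  proof
    fix z assume z: "z \<in> closure (toric_chamber E \<omega>) \<inter> Dtor \<pi>"
    then have "z \<in> range tmap" using D1[OF assms(1)] by auto
    moreover have "\<forall>(i,j)\<in>eqv \<tau>. z$i = z$j" using a z unfolding Rt_def by blast
    ultimately show "z \<in> Dtor \<tau>" using D1[OF assms(2)] by auto
  qed
  then show "closure (toric_chamber E \<omega>) \<inter> Dtor \<tau> = closure (toric_chamber E \<omega>) \<inter> Dtor \<pi>"
    using Dmono[OF assms] by blast
qed

lemma T1: assumes "partition_on UNIV \<pi>"
  shows "tor_cl E \<omega> \<pi> = UNIV // Rt E \<omega> \<pi>"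
proof -
  define K where "K = {\<tau>. partition_on UNIV \<tau> \<and> refines \<pi> \<tau> \<and>
        closure (toric_chamber E \<omega>) \<inter> Dtor \<tau> = closure (toric_chamber E \<omega>) \<inter> Dtor \<pi>}"
  define \<sigma> where "\<sigma> = UNIV // Rt E \<omega> \<pi>"
  have sp: "partition_on UNIV \<sigma>" unfolding \<sigma>_def by (rule partition_on_quotient[OF Req])
  have se: "eqv \<sigma> = Rt E \<omega> \<pi>" unfolding \<sigma>_def by (rule P4[OF Req])
  have sr: "refines \<pi> \<sigma>" using P3[OF assms sp] se Rsub[OF assms] by simp
  have Kiff: "\<tau> \<in> K \<longleftrightarrow> partition_on UNIV \<tau> \<and> refines \<pi> \<tau> \<and> eqv \<tau> \<subseteq> Rt E \<omega> \<pi>" for \<tau>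
  proof
    assume "\<tau> \<in> K"
    then have a: "partition_on UNIV \<tau>" "refines \<pi> \<tau>"
      "closure (toric_chamber E \<omega>) \<inter> Dtor \<tau> = closure (toric_chamber E \<omega>) \<inter> Dtor \<pi>"
      unfolding K_def by auto
    then show "partition_on UNIV \<tau> \<and> refines \<pi> \<tau> \<and> eqv \<tau> \<subseteq> Rt E \<omega> \<pi>"
      using Kchar[OF assms a(1,2)] by simp
  next
    assume a: "partition_on UNIV \<tau> \<and> refines \<pi> \<tau> \<and> eqv \<tau> \<subseteq> Rt E \<omega> \<pi>"
    then show "\<tau> \<in> K" using Kchar[OF assms, of \<tau>] unfolding K_def by simp
  qed
  have sK: "\<sigma> \<in> K" unfolding Kiff using sp sr se by simp
  have smax: "\<forall>\<tau>\<in>K. refines \<tau> \<sigma>"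
  proof
    fix \<tau> assume "\<tau> \<in> K"
    then have "partition_on UNIV \<tau>" "eqv \<tau> \<subseteq> Rt E \<omega> \<pi>" unfolding Kiff by auto
    then show "refines \<tau> \<sigma>" using P3[of \<tau> \<sigma>] sp se by simp
  qed
  have "(THE \<sigma>. \<sigma> \<in> K \<and> (\<forall>\<tau>\<in>K. refines \<tau> \<sigma>)) = \<sigma>"
  proof (rule the_equality)
    show "\<sigma> \<in> K \<and> (\<forall>\<tau>\<in>K. refines \<tau> \<sigma>)" using sK smax by blast
    fix \<sigma>' assume a: "\<sigma>' \<in> K \<and> (\<forall>\<tau>\<in>K. refines \<tau> \<sigma>')"
    then have "\<sigma>' \<in> K" by blast
    then have p': "partition_on UNIV \<sigma>'" and e1: "eqv \<sigma>' \<subseteq> Rt E \<omega> \<pi>" unfolding Kiff by auto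
    have "refines \<sigma> \<sigma>'" using a sK by blast
    then have "Rt E \<omega> \<pi> \<subseteq> eqv \<sigma>'" using P3[OF sp p'] se by simp
    then have "eqv \<sigma>' = eqv \<sigma>" using e1 se by (rule_tac subset_antisym) simp_all
    then show "\<sigma>' = \<sigma>" using P5[OF p' sp] by simp
  qed
  moreover have "tor_cl E \<omega> \<pi> = (THE \<sigma>. \<sigma> \<in> K \<and> (\<forall>\<tau>\<in>K. refines \<tau> \<sigma>))"
    unfolding tor_cl_def K_def by (rule refl)
  ultimately show ?thesis unfolding \<sigma>_def by simp
qed



lemma KL:
  assumes om: "\<omega> \<in> Acyc E" and pp: "partition_on UNIV \<pi>"
    and a: "a \<in> Ba" "Ba \<in> \<pi>" and b: "b \<in> Bb" "Bb \<in> \<pi>"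
    and nr: "(Bb, Ba) \<notin> (quot_rel (poset_of \<omega>) \<pi>)\<^sup>*"
  shows "(a, b) \<notin> Rt E \<omega> \<pi>"
proof
  assume ab: "(a, b) \<in> Rt E \<omega> \<pi>"
  let ?Q = "quot_rel (poset_of \<omega>) \<pi>"
  define P where "P k \<longleftrightarrow> (\<exists>Bk\<in>\<pi>. k \<in> Bk \<and> (Bb, Bk) \<in> ?Q\<^sup>*)" for k
  define x :: "real^'a" where "x = (\<chi> k. if P k then 2/3 else 1/3)"
  have Pb: "P b" unfolding P_def using b by blast
  have Pa: "\<not> P a"
  proof
    assume "P a"
    then obtain Bk where "Bk \<in> \<pi>" "a \<in> Bk" "(Bb, Bk) \<in> ?Q\<^sup>*" unfolding P_def by blast
    moreover have "Bk = Ba" using blk_unique[OF pp \<open>Bk \<in> \<pi>\<close> a(2) \<open>a \<in> Bk\<close> a(1)] .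
    ultimately show False using nr by simp
  qed
  have PB: "P i \<longleftrightarrow> (Bb, B) \<in> ?Q\<^sup>*" if "B \<in> \<pi>" "i \<in> B" for i B
  proof
    assume "P i"
    then obtain Bk where "Bk \<in> \<pi>" "i \<in> Bk" "(Bb, Bk) \<in> ?Q\<^sup>*" unfolding P_def by blast
    moreover have "Bk = B" using blk_unique[OF pp \<open>Bk \<in> \<pi>\<close> that(1) \<open>i \<in> Bk\<close> that(2)] .
    ultimately show "(Bb, B) \<in> ?Q\<^sup>*" by simp
  next
    assume "(Bb, B) \<in> ?Q\<^sup>*" then show "P i" unfolding P_def using that by blast
  qed
  have xD: "x \<in> Dpi \<pi>"
    unfolding Dpi_def
  proof (intro CollectI ballI)
    fix B i j assume "B \<in> \<pi>" "i \<in> B" "j \<in> B"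
    then have "P i = P j" using PB by blast
    then show "x $ i = x $ j" unfolding x_def by simp
  qed
  have mono: "\<forall>(k,l)\<in>\<omega>. x$k \<le> x$l"
  proof (intro ballI, clarify)
    fix k l assume kl: "(k,l) \<in> \<omega>"
    have "P l" if Pk: "P k"
    proof -
      obtain Bk where Bk: "Bk \<in> \<pi>" "k \<in> Bk" "(Bb, Bk) \<in> ?Q\<^sup>*" using Pk unfolding P_def by blast
      obtain Bl where Bl: "Bl \<in> \<pi>" "l \<in> Bl" using blk_ex[OF pp] by blast
      have "(k,l) \<in> poset_of \<omega>" using kl unfolding poset_of_def by blast
      then have "(Bk, Bl) \<in> ?Q" unfolding quot_rel_def using Bk Bl by blast
      then have "(Bb, Bl) \<in> ?Q\<^sup>*" using Bk(3) by (meson rtrancl_into_rtrancl)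
      then show "P l" unfolding P_def using Bl by blast
    qed
    then show "x$k \<le> x$l" unfolding x_def by auto
  qed
  have bnd: "\<forall>i. 0 \<le> x$i \<and> x$i \<le> 1" unfolding x_def by auto
  have "acyclic \<omega>" using om unfolding Acyc_def by blast
  then obtain y where y: "y \<in> chamb \<omega>" using L5 by blast
  have "tmap x \<in> closure (toric_chamber E \<omega>)" using L4[OF om y mono bnd] .
  moreover have "tmap x \<in> Dtor \<pi>" unfolding Dtor_def using xD by blast
  ultimately have "tmap x $ a = tmap x $ b" using ab unfolding Rt_def by blast
  then have "cis (2 * pi * (1/3)) = cis (2 * pi * (2/3))" unfolding tmap_def x_def using Pa Pb by simp
  then have "(1/3::real) - 2/3 \<in> \<int>" by (rule L1)
  moreover have "(1/3::real) - 2/3 \<notin> \<int>" by (rule not_Ints_small) auto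
  ultimately show False by blast
qed

lemma Dpart:
  assumes om: "\<omega> \<in> Acyc E" and pp: "partition_on UNIV \<pi>"
  shows "refines (UNIV // Rt E \<omega> \<pi>) (ord_cl (poset_of \<omega>) \<pi>)"
  unfolding refines_def
proof
  let ?Q = "quot_rel (poset_of \<omega>) \<pi>"
  fix B assume "B \<in> UNIV // Rt E \<omega> \<pi>"
  then obtain i where B: "B = Rt E \<omega> \<pi> `` {i}" unfolding quotient_def by blast
  obtain B0 where B0: "B0 \<in> \<pi>" "i \<in> B0" using blk_ex[OF pp] by blast
  define A where "A = \<Union>{B' \<in> \<pi>. (B0, B') \<in> ?Q\<^sup>* \<and> (B', B0) \<in> ?Q\<^sup>*}"
  have "A \<in> ord_cl (poset_of \<omega>) \<pi>" unfolding ord_cl_def A_def using B0 by blast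
  moreover have "B \<subseteq> A"
  proof
    fix j assume "j \<in> B"
    then have ij: "(i,j) \<in> Rt E \<omega> \<pi>" using B by simp
    then have ji: "(j,i) \<in> Rt E \<omega> \<pi>" using Req unfolding equiv_def sym_def by blast
    obtain B1 where B1: "B1 \<in> \<pi>" "j \<in> B1" using blk_ex[OF pp] by blast
    have "(B1, B0) \<in> ?Q\<^sup>*" using KL[OF om pp B0(2,1) B1(2,1)] ij by blast
    moreover have "(B0, B1) \<in> ?Q\<^sup>*" using KL[OF om pp B1(2,1) B0(2,1)] ji by blast
    ultimately show "j \<in> A" unfolding A_def using B1 by blast
  qed
  ultimately show "\<exists>B'\<in>ord_cl (poset_of \<omega>) \<pi>. B \<subseteq> B'" by blast
qed



lemma main_gen:
  fixes E \<omega> :: "('v::finite \<times> 'v) set" and \<pi> \<pi>' :: "'v set set"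
  assumes om: "\<omega> \<in> Acyc E" and pp: "partition_on UNIV \<pi>" and pp': "partition_on UNIV \<pi>'"
  shows "(ord_cl (poset_of \<omega>) \<pi> = \<pi> \<longrightarrow> tor_cl E \<omega> \<pi> = \<pi>)
    \<and> (refines \<pi> \<pi>' \<longrightarrow> refines (tor_cl E \<omega> \<pi>) (tor_cl E \<omega> \<pi>'))
    \<and> (refines \<pi> \<pi>' \<and> refines \<pi>' (tor_cl E \<omega> \<pi>) \<longrightarrow> tor_cl E \<omega> \<pi>' = tor_cl E \<omega> \<pi>)
    \<and> refines (tor_cl E \<omega> \<pi>) (ord_cl (poset_of \<omega>) \<pi>)"
proof -
  let ?C = "closure (toric_chamber E \<omega>)"
  have T: "tor_cl E \<omega> \<pi> = UNIV // Rt E \<omega> \<pi>" by (rule T1[OF pp])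
  have T': "tor_cl E \<omega> \<pi>' = UNIV // Rt E \<omega> \<pi>'" by (rule T1[OF pp'])
  have sp: "partition_on UNIV (tor_cl E \<omega> \<pi>)" unfolding T by (rule partition_on_quotient[OF Req])
  have sp': "partition_on UNIV (tor_cl E \<omega> \<pi>')" unfolding T' by (rule partition_on_quotient[OF Req])
  have se: "eqv (tor_cl E \<omega> \<pi>) = Rt E \<omega> \<pi>" unfolding T by (rule P4[OF Req])
  have se': "eqv (tor_cl E \<omega> \<pi>') = Rt E \<omega> \<pi>'" unfolding T' by (rule P4[OF Req])
  have D: "refines (tor_cl E \<omega> \<pi>) (ord_cl (poset_of \<omega>) \<pi>)" unfolding T by (rule Dpart[OF om pp])
  have Rmono: "Rt E \<omega> \<pi> \<subseteq> Rt E \<omega> \<pi>'" if r: "refines \<pi> \<pi>'"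
  proof -
    have "Dtor \<pi>' \<subseteq> Dtor \<pi>" by (rule Dmono[OF pp pp' r])
    then show ?thesis unfolding Rt_def by blast
  qed
  have A: "tor_cl E \<omega> \<pi> = \<pi>" if oc: "ord_cl (poset_of \<omega>) \<pi> = \<pi>"
  proof -
    have "refines (tor_cl E \<omega> \<pi>) \<pi>" using D oc by simp
    then have "eqv (tor_cl E \<omega> \<pi>) \<subseteq> eqv \<pi>" using P3[OF sp pp] by simp
    moreover have "eqv \<pi> \<subseteq> eqv (tor_cl E \<omega> \<pi>)" using Rsub[OF pp] se by simp
    ultimately show ?thesis using P5[OF sp pp] by blast
  qed
  have B: "refines (tor_cl E \<omega> \<pi>) (tor_cl E \<omega> \<pi>')" if r: "refines \<pi> \<pi>'"
    using P3[OF sp sp'] se se' Rmono[OF r] by simp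
  have C: "tor_cl E \<omega> \<pi>' = tor_cl E \<omega> \<pi>" if r: "refines \<pi> \<pi>'" and r2: "refines \<pi>' (tor_cl E \<omega> \<pi>)"
  proof -
    have sr: "refines \<pi> (tor_cl E \<omega> \<pi>)" using P3[OF pp sp] se Rsub[OF pp] by simp
    have "?C \<inter> Dtor (tor_cl E \<omega> \<pi>) = ?C \<inter> Dtor \<pi>" using Kchar[OF pp sp sr] se by simp
    moreover have "Dtor (tor_cl E \<omega> \<pi>) \<subseteq> Dtor \<pi>'" by (rule Dmono[OF pp' sp r2])
    ultimately have "?C \<inter> Dtor \<pi> \<subseteq> Dtor \<pi>'" by blast
    then have "Rt E \<omega> \<pi>' \<subseteq> Rt E \<omega> \<pi>" unfolding Rt_def by blast
    then have "Rt E \<omega> \<pi>' = Rt E \<omega> \<pi>" using Rmono[OF r] by blast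
    then show ?thesis using T T' by simp
  qed
  show ?thesis using A B C D by blast
qed

lemma acyc_rank: fixes f :: "'v \<Rightarrow> real" assumes "\<forall>(i,j)\<in>\<omega>. f i < f j" shows "acyclic \<omega>"
proof -
  have "f i < f j" if "(i,j) \<in> \<omega>\<^sup>+" for i j
    using that
  proof (induction rule: trancl_induct)
    case (base y) then show ?case using assms by auto
  next
    case (step y z) then show ?case using assms by fastforce
  qed
  then show ?thesis unfolding acyclic_def by fastforce
qed

lemma ex3:
  "let E3 = {(i, j::3). i \<noteq> j}; \<omega>3 = {(3, 1), (3, 2), (1, 2)}; \<pi>3 = {{1}, {2, 3}} in
        simple_graph E3 \<and> \<omega>3 \<in> Acyc E3 \<and> partition_on UNIV \<pi>3
        \<and> tor_cl E3 \<omega>3 \<pi>3 = \<pi>3 \<and> ord_cl (poset_of \<omega>3) \<pi>3 = {{1, 2, 3}} \<and> \<pi>3 \<noteq> {{1, 2, 3}}"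
proof -
  define E3 where "E3 = {(i, j::3). i \<noteq> j}"
  define \<omega>3 :: "(3 \<times> 3) set" where "\<omega>3 = {(3, 1), (3, 2), (1, 2)}"
  define \<pi>3 :: "3 set set" where "\<pi>3 = {{1}, {2, 3}}"
  have d: "(1::3) \<noteq> 2" "(1::3) \<noteq> 3" "(2::3) \<noteq> 3" by simp_all
  have sg: "simple_graph E3" unfolding simple_graph_def E3_def sym_def irrefl_def by auto
  have acy: "acyclic \<omega>3"
    by (rule acyc_rank[where f = "\<lambda>i. if i = 3 then 0 else if i = 1 then 1 else 2"]) (auto simp: \<omega>3_def d)
  have om: "\<omega>3 \<in> Acyc E3"
  proof -
    have "p \<in> \<omega>3 \<union> \<omega>3\<inverse> \<longleftrightarrow> p \<in> E3" for p
    proof -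
      obtain a b where p: "p = (a,b)" by (cases p)
      have "a = 1 \<or> a = 2 \<or> a = 3" "b = 1 \<or> b = 2 \<or> b = 3" using exhaust_3 by blast+
      then show ?thesis unfolding p \<omega>3_def E3_def using d by (elim disjE) auto
    qed
    then have "\<omega>3 \<union> \<omega>3\<inverse> = E3" by blast
    moreover have "\<omega>3 \<inter> \<omega>3\<inverse> = {}" unfolding \<omega>3_def using d by auto
    ultimately show ?thesis unfolding Acyc_def using acy by blast
  qed
  have pp: "partition_on UNIV \<pi>3"
  proof -
    have "\<Union>\<pi>3 = UNIV" unfolding \<pi>3_def UNIV_3 by auto
    moreover have "disjoint \<pi>3" unfolding \<pi>3_def disjoint_def using d by auto
    moreover have "{} \<notin> \<pi>3" unfolding \<pi>3_def by auto
    ultimately show ?thesis unfolding partition_on_def by blast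
  qed
  have tc: "tor_cl E3 \<omega>3 \<pi>3 = \<pi>3"
  proof -
    define x :: "real^3" where "x = (\<chi> i. if i = 1 then 1/2 else if i = 2 then 1 else 0)"
    have mono: "\<forall>(k,l)\<in>\<omega>3. x$k \<le> x$l" unfolding \<omega>3_def x_def using d by auto
    have bnd: "\<forall>i. 0 \<le> x$i \<and> x$i \<le> 1" unfolding x_def by auto
    obtain y where y: "y \<in> chamb \<omega>3" using L5[OF acy] by blast
    have zC: "tmap x \<in> closure (toric_chamber E3 \<omega>3)" using L4[OF om y mono bnd] .
    have z1: "tmap x $ 1 = -1" unfolding tmap_def x_def by simp
    have z2: "tmap x $ 2 = 1" unfolding tmap_def x_def using d by simp
    have z3: "tmap x $ 3 = 1" unfolding tmap_def x_def using d by simp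
    have e3: "eqv \<pi>3 = {(1,1),(2,2),(3,3),(2,3),(3,2)}" unfolding eqv_def \<pi>3_def by auto
    have zD: "tmap x \<in> Dtor \<pi>3" unfolding D1[OF pp] e3 using z2 z3 by auto
    have "Rt E3 \<omega>3 \<pi>3 \<subseteq> eqv \<pi>3"
    proof
      fix p assume p: "p \<in> Rt E3 \<omega>3 \<pi>3"
      obtain i j where ij: "p = (i,j)" by (cases p)
      have eq: "tmap x $ i = tmap x $ j" using p zC zD unfolding ij Rt_def by blast
      show "p \<in> eqv \<pi>3" unfolding ij e3
      proof -
        have "i = 1 \<or> i = 2 \<or> i = 3" "j = 1 \<or> j = 2 \<or> j = 3" using exhaust_3 by blast+
        then show "(i, j) \<in> {(1, 1), (2, 2), (3, 3), (2, 3), (3, 2)}" using eq z1 z2 z3 d by (elim disjE) auto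
      qed
    qed
    then have "Rt E3 \<omega>3 \<pi>3 = eqv \<pi>3" using Rsub[OF pp] by blast
    then show ?thesis unfolding T1[OF pp] using P2[OF pp] by simp
  qed
  have oc: "ord_cl (poset_of \<omega>3) \<pi>3 = {{1, 2, 3}}"
  proof -
    let ?Q = "quot_rel (poset_of \<omega>3) \<pi>3"
    have m1: "{1} \<in> \<pi>3" "{2,3} \<in> \<pi>3" unfolding \<pi>3_def by simp_all
    have "(1,2) \<in> poset_of \<omega>3" unfolding poset_of_def \<omega>3_def by (rule r_into_trancl) simp
    then have q1: "({1}, {2,3}) \<in> ?Q" unfolding quot_rel_def using m1 by blast
    have "(3,1) \<in> poset_of \<omega>3" unfolding poset_of_def \<omega>3_def by (rule r_into_trancl) simp
    then have q2: "({2,3}, {1}) \<in> ?Q" unfolding quot_rel_def using m1 by blast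
    have reach: "(B, B') \<in> ?Q\<^sup>*" if "B \<in> \<pi>3" "B' \<in> \<pi>3" for B B'
    proof -
      have "B = {1} \<or> B = {2,3}" "B' = {1} \<or> B' = {2,3}" using that unfolding \<pi>3_def by blast+
      then show ?thesis using q1 q2 by (elim disjE) auto
    qed
    have all: "{B' \<in> \<pi>3. (B, B') \<in> ?Q\<^sup>* \<and> (B', B) \<in> ?Q\<^sup>*} = \<pi>3" if "B \<in> \<pi>3" for B
      using that reach by blast
    have U: "\<Union>\<pi>3 = {1,2,3}" unfolding \<pi>3_def by auto
    have "ord_cl (poset_of \<omega>3) \<pi>3 = {\<Union>\<pi>3 | B. B \<in> \<pi>3}" unfolding ord_cl_def
    proof (rule Collect_cong)
      fix A
      show "(\<exists>B. A = \<Union>{B' \<in> \<pi>3. (B, B') \<in> ?Q\<^sup>* \<and> (B', B) \<in> ?Q\<^sup>*} \<and> B \<in> \<pi>3) \<longleftrightarrow> (\<exists>B. A = \<Union>\<pi>3 \<and> B \<in> \<pi>3)"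
      proof
        assume "\<exists>B. A = \<Union>{B' \<in> \<pi>3. (B, B') \<in> ?Q\<^sup>* \<and> (B', B) \<in> ?Q\<^sup>*} \<and> B \<in> \<pi>3"
        then obtain B where "A = \<Union>{B' \<in> \<pi>3. (B, B') \<in> ?Q\<^sup>* \<and> (B', B) \<in> ?Q\<^sup>*}" "B \<in> \<pi>3" by blast
        then show "\<exists>B. A = \<Union>\<pi>3 \<and> B \<in> \<pi>3" using all[of B] by auto
      next
        assume "\<exists>B. A = \<Union>\<pi>3 \<and> B \<in> \<pi>3"
        then obtain B where "A = \<Union>\<pi>3" "B \<in> \<pi>3" by blast
        then show "\<exists>B. A = \<Union>{B' \<in> \<pi>3. (B, B') \<in> ?Q\<^sup>* \<and> (B', B) \<in> ?Q\<^sup>*} \<and> B \<in> \<pi>3" using all[of B] by auto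
      qed
    qed
    also have "\<dots> = {\<Union>\<pi>3}" using m1 by blast
    also have "\<dots> = {{1,2,3}}" unfolding U ..
    finally show ?thesis .
  qed
  have ne: "\<pi>3 \<noteq> {{1, 2, 3}}"
  proof
    assume "\<pi>3 = {{1, 2, 3}}"
    then have "{1::3} = {1,2,3}" unfolding \<pi>3_def by blast
    then show False using d by (metis insertCI singletonD)
  qed
  show ?thesis unfolding Let_def using sg om pp tc oc ne unfolding E3_def \<omega>3_def \<pi>3_def by blast
qed



theorem mainTheorem4:
  fixes E \<omega> :: "('v::finite \<times> 'v) set" and \<pi> \<pi>' :: "'v set set"
  assumes "simple_graph E" and "\<omega> \<in> Acyc E"
    and "partition_on UNIV \<pi>" and "partition_on UNIV \<pi>'"
  shows "(ord_cl (poset_of \<omega>) \<pi> = \<pi> \<longrightarrow> tor_cl E \<omega> \<pi> = \<pi>)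
    \<and> (refines \<pi> \<pi>' \<longrightarrow> refines (tor_cl E \<omega> \<pi>) (tor_cl E \<omega> \<pi>'))
    \<and> (refines \<pi> \<pi>' \<and> refines \<pi>' (tor_cl E \<omega> \<pi>) \<longrightarrow> tor_cl E \<omega> \<pi>' = tor_cl E \<omega> \<pi>)
    \<and> refines (tor_cl E \<omega> \<pi>) (ord_cl (poset_of \<omega>) \<pi>)
    \<and> (let E3 = {(i, j::3). i \<noteq> j}; \<omega>3 = {(3, 1), (3, 2), (1, 2)}; \<pi>3 = {{1}, {2, 3}} in
        simple_graph E3 \<and> \<omega>3 \<in> Acyc E3 \<and> partition_on UNIV \<pi>3
        \<and> tor_cl E3 \<omega>3 \<pi>3 = \<pi>3 \<and> ord_cl (poset_of \<omega>3) \<pi>3 = {{1, 2, 3}} \<and> \<pi>3 \<noteq> {{1, 2, 3}})"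
  using main_gen[OF assms(2,3,4)] ex3 by blast

end
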